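(* Let $k\ge1$, $a_i,b_i,c_i\in\mathbb{C}$ ($1\le i\le k$), with symbol $f$ and tridiagonal $k$-Toeplitz operator $T(f)$ as in the context. For $\lambda\in\mathbb{C}\setminus\sigma_{ess}(T(f))$ and $z\in\mathbb{C}\setminus\{0\}$, $$\det(f(z)-\lambda I)=(-1)^{k+1}\Big(\prod_{i=1}^kc_i\Big)z+(-1)^{k+1}\Big(\prod_{i=1}^kb_i\Big)z^{-1}+g(\lambda),$$ where $g(\lambda)=\det(A_0-\lambda I)-b_kc_k\,p(\lambda)$ is a polynomial in $\lambda$ of degree $k$, with $p(\lambda)=0$ if $k=1$, $p(\lambda)=1$ if $k=2$, and for $k\ge3$, $p(\lambda)$ the determinant of the $(k-2)\times(k-2)$ tridiagonal matrix with diagonal $a_2-\lambda,\dots,a_{k-1}-\lambda$, superdiagonal $b_2,\dots,b_{k-2}$ and subdiagonal $c_2,\dots,c_{k-2}$. In particular, there are at most $2k$ values $\lambda\in\mathbb{C}$ for which the equation $\det(f(z)-\lambda I)=0$ (in $z$) admits a double root.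
   Context: The tridiagonal $k$-Toeplitz operator $T(f)$ on $\ell^2(\mathbb{N})$ has matrix entries $(i,i)=a_{p(i)}$, $(i,i+1)=b_{p(i)}$, $(i+1,i)=c_{p(i)}$ with index map $i\mapsto((i-1)\bmod k)+1$, all other entries zero. Its symbol is $f(z)=A_{-1}z^{-1}+A_0+A_1z$, where $A_0$ is the $k\times k$ tridiagonal matrix with diagonal $a_1,\dots,a_k$, superdiagonal $b_1,\dots,b_{k-1}$, subdiagonal $c_1,\dots,c_{k-1}$; $A_{-1}$ has single nonzero entry $b_k$ at $(k,1)$; $A_1$ has single nonzero entry $c_k$ at $(1,k)$ (for $k=1$, $f(z)=a_1+c_1z+b_1z^{-1}$). $\sigma_{ess}$ denotes the essential spectrum. *)

theory Defs
  imports "Jordan_Normal_Form.Determinant" "HOL-Computational_Algebra.Polynomial"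
begin

text \<open>Coefficients a, b, c are indexed 1..k as in the paper; matrix rows/columns are
  0-based in Jordan_Normal_Form, so entry (i,j) (0-based) is paper entry (i+1,j+1).\<close>

definition A0 :: "nat \<Rightarrow> (nat \<Rightarrow> complex) \<Rightarrow> (nat \<Rightarrow> complex) \<Rightarrow> (nat \<Rightarrow> complex)
    \<Rightarrow> complex mat" where
  "A0 k a b c = mat k k (\<lambda>(i,j).
      (if i = j then a (i+1) else 0)
    + (if j = i + 1 then b (i+1) else 0)
    + (if i = j + 1 then c (j+1) else 0))"

text \<open>The symbol f(z) = A_(-1) z^(-1) + A_0 + A_1 z, where A_(-1) has the single
  nonzero entry b_k at (k,1) and A_1 has the single nonzero entry c_k at (1,k).
  (For k = 1 this gives a_1 + c_1 z + b_1 z^(-1).)\<close>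
definition symbol :: "nat \<Rightarrow> (nat \<Rightarrow> complex) \<Rightarrow> (nat \<Rightarrow> complex) \<Rightarrow> (nat \<Rightarrow> complex)
    \<Rightarrow> complex \<Rightarrow> complex mat" where
  "symbol k a b c z = A0 k a b c
     + mat k k (\<lambda>(i,j). if i = k - 1 \<and> j = 0 then b k * inverse z else 0)
     + mat k k (\<lambda>(i,j). if i = 0 \<and> j = k - 1 then c k * z else 0)"

definition pdet :: "nat \<Rightarrow> (nat \<Rightarrow> complex) \<Rightarrow> (nat \<Rightarrow> complex) \<Rightarrow> (nat \<Rightarrow> complex)
    \<Rightarrow> complex \<Rightarrow> complex" where
  "pdet k a b c lam = (if k = 1 then 0 else
     det (mat (k-2) (k-2) (\<lambda>(i,j).
        (if i = j then a (i+2) - lam else 0)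
      + (if j = i + 1 then b (i+2) else 0)
      + (if i = j + 1 then c (j+2) else 0))))"

definition double_root :: "nat \<Rightarrow> (nat \<Rightarrow> complex) \<Rightarrow> (nat \<Rightarrow> complex) \<Rightarrow> (nat \<Rightarrow> complex)
    \<Rightarrow> complex \<Rightarrow> complex \<Rightarrow> bool" where
  "double_root k a b c lam z0 \<longleftrightarrow> z0 \<noteq> 0 \<and>
     det (symbol k a b c z0 - lam \<cdot>\<^sub>m 1\<^sub>m k) = 0 \<and>
     ((\<lambda>z. det (symbol k a b c z - lam \<cdot>\<^sub>m 1\<^sub>m k)) has_field_derivative 0) (at z0)"

end

theory Submission
  imports Defs
begin

definition trid :: "nat \<Rightarrow> (nat \<Rightarrow> 'a::comm_ring_1) \<Rightarrow> (nat \<Rightarrow> 'a) \<Rightarrow> (nat \<Rightarrow> 'a) \<Rightarrow> 'a mat" where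
  "trid n d u l = mat n n (\<lambda>(i,j). if i = j then d i else if j = Suc i then u i else if i = Suc j then l j else 0)"

fun Dt :: "(nat \<Rightarrow> 'a::comm_ring_1) \<Rightarrow> (nat \<Rightarrow> 'a) \<Rightarrow> (nat \<Rightarrow> 'a) \<Rightarrow> nat \<Rightarrow> 'a" where
  "Dt d u l 0 = 1"
| "Dt d u l (Suc 0) = d 0"
| "Dt d u l (Suc (Suc n)) = d (Suc n) * Dt d u l (Suc n) - u n * l n * Dt d u l n"

lemma laplace_row_sparse:
  assumes A: "(A :: 'a :: comm_ring_1 mat) \<in> carrier_mat n n" and i: "i < n"
    and S: "S \<subseteq> {..<n}" and z: "\<And>j. j < n \<Longrightarrow> j \<notin> S \<Longrightarrow> A $$ (i,j) = 0"
  shows "det A = (\<Sum>j\<in>S. A $$ (i,j) * cofactor A i j)"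
proof -
  have "det A = (\<Sum>j<n. A $$ (i,j) * cofactor A i j)" by (rule laplace_expansion_row[OF A i])
  also have "\<dots> = (\<Sum>j\<in>S. A $$ (i,j) * cofactor A i j)"
    by (rule sum.mono_neutral_right, insert S z, auto)
  finally show ?thesis .
qed

lemma laplace_col_sparse:
  assumes A: "(A :: 'a :: comm_ring_1 mat) \<in> carrier_mat n n" and j: "j < n"
    and S: "S \<subseteq> {..<n}" and z: "\<And>i. i < n \<Longrightarrow> i \<notin> S \<Longrightarrow> A $$ (i,j) = 0"
  shows "det A = (\<Sum>i\<in>S. A $$ (i,j) * cofactor A i j)"
proof -
  have "det A = (\<Sum>i<n. A $$ (i,j) * cofactor A i j)" by (rule laplace_expansion_column[OF A j])
  also have "\<dots> = (\<Sum>i\<in>S. A $$ (i,j) * cofactor A i j)"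
    by (rule sum.mono_neutral_right, insert S z, auto)
  finally show ?thesis .
qed

lemma det_trid: "det (trid n d u l) = Dt d u l n"
proof (induction d u l n rule: Dt.induct)
  case (1 d u l)
  then show ?case by (simp add: trid_def)
next
  case (2 d u l)
  then show ?case by (subst det_single, auto simp: trid_def)
next
  case (3 d u l m)
  let ?T = "trid (Suc (Suc m)) d u l"
  have c: "?T \<in> carrier_mat (Suc (Suc m)) (Suc (Suc m))" by (simp add: trid_def)
  have m1: "mat_delete ?T (Suc m) (Suc m) = trid (Suc m) d u l"
    by (rule eq_matI, auto simp: trid_def mat_delete_def)
  define N where "N = mat_delete ?T (Suc m) m"
  have cN: "N \<in> carrier_mat (Suc m) (Suc m)" by (simp add: N_def trid_def mat_delete_def)
  have m2: "mat_delete N m m = trid m d u l"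
    by (rule eq_matI, auto simp: N_def trid_def mat_delete_def)
  have dN: "det N = u m * Dt d u l m"
    apply (subst laplace_col_sparse[OF cN, of m "{m}"])
    apply (auto simp: N_def trid_def mat_delete_def cofactor_def)[3]
    using m2 "3.IH"(2) apply (simp add: cofactor_def)
    apply (simp add: N_def trid_def mat_delete_def)
    done
  show ?case
    apply (subst laplace_row_sparse[OF c, of "Suc m" "{m, Suc m}"])
    apply (auto simp: trid_def)[3]
    apply (simp add: cofactor_def m1 "3.IH"(1))
    using dN unfolding N_def apply (simp add: trid_def)
    done
qed

definition cyc :: "nat \<Rightarrow> (nat \<Rightarrow> 'a::comm_ring_1) \<Rightarrow> (nat \<Rightarrow> 'a) \<Rightarrow> (nat \<Rightarrow> 'a) \<Rightarrow> 'a \<Rightarrow> 'a \<Rightarrow> 'a mat" where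
  "cyc n d u l \<beta> \<gamma> = mat n n (\<lambda>(i,j). (if i = j then d i else if j = Suc i then u i else if i = Suc j then l j else 0)
     + (if i = n - 1 \<and> j = 0 then \<beta> else 0) + (if i = 0 \<and> j = n - 1 then \<gamma> else 0))"

lemma det_cyc3:
  fixes d u l :: "nat \<Rightarrow> 'a::comm_ring_1"
  shows "det (cyc (Suc (Suc (Suc m))) d u l \<beta> \<gamma>) = Dt d u l (Suc (Suc (Suc m)))
    - \<beta> * \<gamma> * Dt (\<lambda>i. d (Suc i)) (\<lambda>i. u (Suc i)) (\<lambda>i. l (Suc i)) (Suc m)
    + (-1)^m * (\<gamma> * (\<Prod>r<Suc (Suc m). l r) + \<beta> * (\<Prod>r<Suc (Suc m). u r))"
proof -
  let ?M = "cyc (Suc (Suc (Suc m))) d u l \<beta> \<gamma>"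
  have c: "?M \<in> carrier_mat (Suc (Suc (Suc m))) (Suc (Suc (Suc m)))" by (simp add: cyc_def)
  have m1: "mat_delete ?M (Suc (Suc m)) (Suc (Suc m)) = trid (Suc (Suc m)) d u l"
    by (rule eq_matI, auto simp: trid_def cyc_def mat_delete_def)
  define N2 where "N2 = mat_delete ?M (Suc (Suc m)) (Suc m)"
  have cN2: "N2 \<in> carrier_mat (Suc (Suc m)) (Suc (Suc m))" by (simp add: N2_def cyc_def mat_delete_def)
  have m21: "mat_delete N2 (Suc m) (Suc m) = trid (Suc m) d u l"
    by (rule eq_matI, auto simp: N2_def trid_def cyc_def mat_delete_def)
  have m22: "det (mat_delete N2 0 (Suc m)) = (\<Prod>r<Suc m. l r)"
  proof -
    have "det (mat_delete N2 0 (Suc m)) = prod_list (diag_mat (mat_delete N2 0 (Suc m)))"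
      by (rule det_upper_triangular[of _ "Suc m"], auto simp: upper_triangular_def N2_def cyc_def mat_delete_def)
    also have "\<dots> = (\<Prod>r<Suc m. l r)"
      by (subst prod_list_diag_prod, auto simp: N2_def cyc_def mat_delete_def atLeast0LessThan intro!: prod.cong)
    finally show ?thesis .
  qed
  have dN2: "det N2 = \<gamma> * (-1)^(Suc m) * (\<Prod>r<Suc m. l r) + u (Suc m) * Dt d u l (Suc m)"
    apply (subst laplace_col_sparse[OF cN2, of "Suc m" "{0, Suc m}"])
    apply (auto simp: N2_def cyc_def mat_delete_def)[3]
    using m21 m22 det_trid[of "Suc m" d u l] apply (simp add: cofactor_def)
    apply (simp add: N2_def cyc_def mat_delete_def)
    done
  define N3 where "N3 = mat_delete ?M (Suc (Suc m)) 0"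
  have cN3: "N3 \<in> carrier_mat (Suc (Suc m)) (Suc (Suc m))" by (simp add: N3_def cyc_def mat_delete_def)
  have m31: "det (mat_delete N3 0 0) = (\<Prod>r<Suc m. u (Suc r))"
  proof -
    have "det (mat_delete N3 0 0) = prod_list (diag_mat (mat_delete N3 0 0))"
      by (rule det_lower_triangular[of "Suc m"], auto simp: N3_def cyc_def mat_delete_def)
    also have "\<dots> = (\<Prod>r<Suc m. u (Suc r))"
      by (subst prod_list_diag_prod, auto simp: N3_def cyc_def mat_delete_def atLeast0LessThan intro!: prod.cong)
    finally show ?thesis .
  qed
  have m32: "mat_delete N3 0 (Suc m) = trid (Suc m) (\<lambda>i. d (Suc i)) (\<lambda>i. u (Suc i)) (\<lambda>i. l (Suc i))"
    by (rule eq_matI, auto simp: N3_def trid_def cyc_def mat_delete_def)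
  have dN3: "det N3 = u 0 * (\<Prod>r<Suc m. u (Suc r)) + \<gamma> * (-1)^(Suc m) * Dt (\<lambda>i. d (Suc i)) (\<lambda>i. u (Suc i)) (\<lambda>i. l (Suc i)) (Suc m)"
    apply (subst laplace_row_sparse[OF cN3, of 0 "{0, Suc m}"])
    apply (auto simp: N3_def cyc_def mat_delete_def)[3]
    using m31 m32 det_trid[of "Suc m" "\<lambda>i. d (Suc i)"] apply (simp add: cofactor_def)
    apply (simp add: N3_def cyc_def mat_delete_def)
    done
  have pu: "(\<Prod>r<Suc (Suc m). u r) = u 0 * (\<Prod>r<Suc m. u (Suc r))" by (rule prod.lessThan_Suc_shift)
  have pl: "(\<Prod>r<Suc (Suc m). l r) = (\<Prod>r<Suc m. l r) * l (Suc m)" by simp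
  have "det ?M = ?M $$ (Suc (Suc m), 0) * cofactor ?M (Suc (Suc m)) 0
     + ?M $$ (Suc (Suc m), Suc m) * cofactor ?M (Suc (Suc m)) (Suc m)
     + ?M $$ (Suc (Suc m), Suc (Suc m)) * cofactor ?M (Suc (Suc m)) (Suc (Suc m))"
    by (subst laplace_row_sparse[OF c, of "Suc (Suc m)" "{0, Suc m, Suc (Suc m)}"], auto simp: cyc_def)
  also have "\<dots> = \<beta> * (-1)^m * det N3 + l (Suc m) * (- det N2) + d (Suc (Suc m)) * Dt d u l (Suc (Suc m))"
  proof -
    have e: "?M $$ (Suc (Suc m), 0) = \<beta>" "?M $$ (Suc (Suc m), Suc m) = l (Suc m)"
      "?M $$ (Suc (Suc m), Suc (Suc m)) = d (Suc (Suc m))" by (simp_all add: cyc_def)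
    show ?thesis unfolding e cofactor_def m1 det_trid N2_def[symmetric] N3_def[symmetric] by simp
  qed
  also have "\<dots> = Dt d u l (Suc (Suc (Suc m)))
    - \<beta> * \<gamma> * Dt (\<lambda>i. d (Suc i)) (\<lambda>i. u (Suc i)) (\<lambda>i. l (Suc i)) (Suc m)
    + (-1)^m * (\<gamma> * (\<Prod>r<Suc (Suc m). l r) + \<beta> * (\<Prod>r<Suc (Suc m). u r))"
    unfolding dN2 dN3 pu pl by (simp add: algebra_simps)
  finally show ?thesis .
qed

lemma det_cyc:
  fixes d u l :: "nat \<Rightarrow> 'a::comm_ring_1"
  assumes n: "n \<ge> 1"
  shows "det (cyc n d u l \<beta> \<gamma>) = Dt d u l n
    - \<beta> * \<gamma> * (if n = 1 then 0 else Dt (\<lambda>i. d (Suc i)) (\<lambda>i. u (Suc i)) (\<lambda>i. l (Suc i)) (n - 2))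
    + (-1)^(n+1) * (\<gamma> * (\<Prod>r<n-1. l r) + \<beta> * (\<Prod>r<n-1. u r))"
proof -
  consider "n = 1" | "n = 2" | m where "n = Suc (Suc (Suc m))"
  proof -
    assume h1: "n = 1 \<Longrightarrow> thesis" and h2: "n = 2 \<Longrightarrow> thesis"
      and h3: "\<And>m. n = Suc (Suc (Suc m)) \<Longrightarrow> thesis"
    show thesis
    proof (cases "n = 1 \<or> n = 2")
      case True then show ?thesis using h1 h2 by blast
    next
      case False
      then have "n = Suc (Suc (Suc (n - 3)))" using n by arith
      then show ?thesis by (rule h3)
    qed
  qed
  then show ?thesis
  proof cases
    case 1
    then show ?thesis by (subst det_single, auto simp: cyc_def)
  next
    case 2
    let ?M = "cyc 2 d u l \<beta> \<gamma>"
    have c: "?M \<in> carrier_mat 2 2" by (simp add: cyc_def)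
    have "det ?M = ?M $$ (1, 0) * cofactor ?M 1 0 + ?M $$ (1, 1) * cofactor ?M 1 1"
      by (subst laplace_row_sparse[OF c, of 1 "{0, 1}"], auto)
    also have "cofactor ?M 1 0 = - (u 0 + \<gamma>)"
      unfolding cofactor_def by (subst det_single, auto simp: mat_delete_def cyc_def)
    also have "cofactor ?M 1 1 = d 0"
      unfolding cofactor_def by (subst det_single, auto simp: mat_delete_def cyc_def)
    finally show ?thesis using 2 by (simp add: cyc_def numeral_2_eq_2 algebra_simps)
  next
    case 3
    then show ?thesis using det_cyc3[of m d u l \<beta> \<gamma>] by simp
  qed
qed

lemma poly_Dt: "poly (Dt d u l n) x = Dt (\<lambda>i. poly (d i) x) (\<lambda>i. poly (u i) x) (\<lambda>i. poly (l i) x) n"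
  by (induction d u l n rule: Dt.induct) auto

lemma deg_Dt: "degree (Dt (\<lambda>i. [:\<alpha> i, -1:]) (\<lambda>i. [:bb i:]) (\<lambda>i. [:cc i:]) n) \<le> n
   \<and> coeff (Dt (\<lambda>i. [:\<alpha> i, -1:]) (\<lambda>i. [:bb i:]) (\<lambda>i. [:cc i:]) n) n = (-1)^n"
proof (induction n rule: nat_less_induct)
  case (1 n)
  show ?case
  proof (cases n)
    case 0 then show ?thesis by simp
  next
    case (Suc n1)
    show ?thesis
    proof (cases n1)
      case 0 then show ?thesis using Suc by simp
    next
      case (Suc m)
      let ?P = "\<lambda>n. Dt (\<lambda>i. [:\<alpha> i, -1:]) (\<lambda>i. [:bb i:]) (\<lambda>i. [:cc i:]) n"
      have I1: "degree (?P (Suc m)) \<le> Suc m" "coeff (?P (Suc m)) (Suc m) = (-1)^(Suc m)"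
        using "1.IH" \<open>n = Suc n1\<close> Suc by auto
      have I0: "degree (?P m) \<le> m"
        using "1.IH" \<open>n = Suc n1\<close> Suc by auto
      have e: "?P (Suc (Suc m)) = smult (\<alpha> (Suc m)) (?P (Suc m)) - pCons 0 (?P (Suc m)) - smult (bb m * cc m) (?P m)"
        by (simp add: mult_pCons_left mult.commute[of "bb m" "cc m"])
      have d1: "degree (smult (\<alpha> (Suc m)) (?P (Suc m))) \<le> Suc (Suc m)"
        by (rule order_trans[OF degree_smult_le]) (use I1(1) in simp)
      have d2: "degree (pCons 0 (?P (Suc m))) \<le> Suc (Suc m)"
        by (rule order_trans[OF degree_pCons_le]) (use I1(1) in simp)
      have d3: "degree (smult (bb m * cc m) (?P m)) \<le> Suc (Suc m)"
        by (rule order_trans[OF degree_smult_le]) (use I0 in simp)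
      have deg: "degree (?P (Suc (Suc m))) \<le> Suc (Suc m)"
        unfolding e by (intro degree_diff_le d1 d2 d3)
      have c1: "coeff (?P (Suc m)) (Suc (Suc m)) = 0" using I1 by (simp add: coeff_eq_0)
      have c0: "coeff (?P m) (Suc (Suc m)) = 0" using I0 by (simp add: coeff_eq_0)
      have co: "coeff (?P (Suc (Suc m))) (Suc (Suc m)) = (-1)^(Suc (Suc m))"
        unfolding e using c1 c0 I1 by simp
      show ?thesis using deg co \<open>n = Suc n1\<close> Suc by simp
    qed
  qed
qed

lemma dr_aux:
  fixes C B G z :: complex and F :: "complex \<Rightarrow> complex"
  assumes z: "z \<noteq> 0" and F0: "F z = 0" and Fd: "(F has_field_derivative 0) (at z)"
    and FH: "\<And>w. w \<noteq> 0 \<Longrightarrow> F w = C * w + B * inverse w + G"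
  shows "G * G = 4 * C * B"
proof -
  have Hd: "((\<lambda>w. C * w + B * inverse w + G) has_field_derivative (C - B * inverse (z^2))) (at z)"
    using z by (auto intro!: derivative_eq_intros simp: power2_eq_square field_simps)
  have Fd2: "(F has_field_derivative (C - B * inverse (z^2))) (at z)"
    by (rule has_field_derivative_transform_within_open[OF Hd, of "- {0}"]) (use z FH in auto)
  have d: "C - B * inverse (z^2) = 0" using DERIV_unique[OF Fd2 Fd] .
  from d have Bz: "B = C * z^2" using z by (simp add: field_simps)
  have "C * z + B * inverse z + G = 0" using F0 FH[OF z] by simp
  moreover have "C * z^2 * inverse z = C * z" using z by (simp add: power2_eq_square)
  ultimately have e3: "C * z + C * z + G = 0" unfolding Bz by simp
  have "G = - (2 * C * z)" using e3 by (metis add.commute eq_neg_iff_add_eq_0 mult_2 mult.assoc)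
  then have "G * G = 4 * C * (C * z^2)" by (simp add: power2_eq_square)
  then show "G * G = 4 * C * B" using Bz by simp
qed

theorem lemmaA1:
  fixes k :: nat and a b c :: "nat \<Rightarrow> complex"
  assumes "k \<ge> 1"
  shows "(\<forall>lam z. z \<noteq> 0 \<longrightarrow>
           det (symbol k a b c z - lam \<cdot>\<^sub>m 1\<^sub>m k)
             = (-1)^(k+1) * (\<Prod>i=1..k. c i) * z
             + (-1)^(k+1) * (\<Prod>i=1..k. b i) * inverse z
             + (det (A0 k a b c - lam \<cdot>\<^sub>m 1\<^sub>m k) - b k * c k * pdet k a b c lam))
       \<and> (\<exists>g :: complex poly. degree g = k \<and>
           (\<forall>lam. poly g lam = det (A0 k a b c - lam \<cdot>\<^sub>m 1\<^sub>m k) - b k * c k * pdet k a b c lam))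
       \<and> finite {lam. \<exists>z. double_root k a b c lam z}
       \<and> card {lam. \<exists>z. double_root k a b c lam z} \<le> 2 * k"
proof -
  obtain k' where kk: "k = Suc k'" using assms by (cases k) auto
  define C where "C = (-1)^(k+1) * (\<Prod>i=1..k. c i)"
  define B where "B = (-1)^(k+1) * (\<Prod>i=1..k. b i)"
  define G where "G = (\<lambda>lam. det (A0 k a b c - lam \<cdot>\<^sub>m 1\<^sub>m k) - b k * c k * pdet k a b c lam)"
  have sym: "symbol k a b c z - lam \<cdot>\<^sub>m 1\<^sub>m k
     = cyc k (\<lambda>i. a (Suc i) - lam) (\<lambda>i. b (Suc i)) (\<lambda>i. c (Suc i)) (b k * inverse z) (c k * z)" for z lam
    by (rule eq_matI, auto simp: symbol_def A0_def cyc_def)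
  have A0e: "A0 k a b c - lam \<cdot>\<^sub>m 1\<^sub>m k = trid k (\<lambda>i. a (Suc i) - lam) (\<lambda>i. b (Suc i)) (\<lambda>i. c (Suc i))" for lam
    by (rule eq_matI, auto simp: A0_def trid_def)
  have pde: "pdet k a b c lam = (if k = 1 then 0 else
      Dt (\<lambda>i. a (Suc (Suc i)) - lam) (\<lambda>i. b (Suc (Suc i))) (\<lambda>i. c (Suc (Suc i))) (k - 2))" for lam
  proof -
    have "mat (k-2) (k-2) (\<lambda>(i,j).
        (if i = j then a (i+2) - lam else 0)
      + (if j = i + 1 then b (i+2) else 0)
      + (if i = j + 1 then c (j+2) else 0)) = trid (k-2) (\<lambda>i. a (Suc (Suc i)) - lam) (\<lambda>i. b (Suc (Suc i))) (\<lambda>i. c (Suc (Suc i)))"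
      by (rule eq_matI, auto simp: trid_def)
    then show ?thesis unfolding pdet_def by (simp add: det_trid)
  qed
  have pc: "(\<Prod>i=1..k. c i) = c k * (\<Prod>r<k-1. c (Suc r))"
    unfolding kk by (simp add: prod.atLeast1_atMost_eq mult.commute)
  have pb: "(\<Prod>i=1..k. b i) = b k * (\<Prod>r<k-1. b (Suc r))"
    unfolding kk by (simp add: prod.atLeast1_atMost_eq mult.commute)
  have P1: "det (symbol k a b c z - lam \<cdot>\<^sub>m 1\<^sub>m k) = C * z + B * inverse z + G lam" if z: "z \<noteq> 0" for lam z
  proof -
    have "det (symbol k a b c z - lam \<cdot>\<^sub>m 1\<^sub>m k) = 
      Dt (\<lambda>i. a (Suc i) - lam) (\<lambda>i. b (Suc i)) (\<lambda>i. c (Suc i)) k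
      - (b k * inverse z) * (c k * z) * (if k = 1 then 0 else
          Dt (\<lambda>i. a (Suc (Suc i)) - lam) (\<lambda>i. b (Suc (Suc i))) (\<lambda>i. c (Suc (Suc i))) (k - 2))
      + (-1)^(k+1) * ((c k * z) * (\<Prod>r<k-1. c (Suc r)) + (b k * inverse z) * (\<Prod>r<k-1. b (Suc r)))"
      unfolding sym by (rule det_cyc[OF assms])
    also have "\<dots> = C * z + B * inverse z + G lam"
      unfolding C_def B_def G_def pc pb A0e det_trid pde using z by (simp add: algebra_simps)
    finally show ?thesis .
  qed
  define Q where "Q = (\<lambda>n. Dt (\<lambda>i. [:a (Suc i), -1:]) (\<lambda>i. [:b (Suc i):]) (\<lambda>i. [:c (Suc i):]) n)"
  define R where "R = (\<lambda>n. Dt (\<lambda>i. [:a (Suc (Suc i)), -1:]) (\<lambda>i. [:b (Suc (Suc i)):]) (\<lambda>i. [:c (Suc (Suc i)):]) n)"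
  define g where "g = Q k - smult (b k * c k) (if k = 1 then 0 else R (k - 2))"
  have pg: "poly g lam = G lam" for lam
    unfolding g_def G_def Q_def R_def A0e det_trid pde by (simp add: poly_Dt)
  have dQQ: "degree (Q k) \<le> k \<and> coeff (Q k) k = (-1)^k" unfolding Q_def by (rule deg_Dt)
  have dQ: "degree (Q k) \<le> k" "coeff (Q k) k = (-1)^k" using dQQ by auto
  have dR: "degree (smult (b k * c k) (if k = 1 then 0 else R (k - 2))) < k"
  proof -
    have "degree (R (k - 2)) \<le> k - 2" unfolding R_def by (rule conjunct1[OF deg_Dt])
    then have "degree (if k = 1 then 0 else R (k - 2)) \<le> k - 2" by simp
    then show ?thesis using kk degree_smult_le[of "b k * c k" "if k = 1 then 0 else R (k - 2)"] by linarith
  qed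
  have degg: "degree g = k"
  proof (rule antisym)
    show "degree g \<le> k" unfolding g_def using dQ dR degree_diff_le by (metis less_imp_le_nat)
    have "coeff (smult (b k * c k) (if k = 1 then 0 else R (k - 2))) k = 0" using dR by (rule coeff_eq_0)
    then have "coeff g k = (-1)^k" unfolding g_def coeff_diff using dQ by simp
    then show "k \<le> degree g" by (intro le_degree) simp
  qed
  define h where "h = g * g + [:- (4 * C * B):]"
  have g0: "g \<noteq> 0" using degg assms by auto
  have degh: "degree h = 2 * k" unfolding h_def
    by (subst degree_add_eq_left) (use degg g0 assms in \<open>auto simp: degree_mult_eq\<close>)
  have h0: "h \<noteq> 0" using degh assms by auto
  have sub: "{lam. \<exists>z. double_root k a b c lam z} \<subseteq> {x. poly h x = 0}"
  proof safe
    fix lam z assume dr: "double_root k a b c lam z"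
    have z: "z \<noteq> 0" and F0: "det (symbol k a b c z - lam \<cdot>\<^sub>m 1\<^sub>m k) = 0"
      and Fd: "((\<lambda>w. det (symbol k a b c w - lam \<cdot>\<^sub>m 1\<^sub>m k)) has_field_derivative 0) (at z)"
      using dr unfolding double_root_def by auto
    have "G lam * G lam = 4 * C * B"
      by (rule dr_aux[OF z F0 Fd]) (use P1 in auto)
    then show "poly h lam = 0" unfolding h_def by (simp add: pg)
  qed
  have fin: "finite {lam. \<exists>z. double_root k a b c lam z}"
    using finite_subset[OF sub poly_roots_finite[OF h0]] .
  have card: "card {lam. \<exists>z. double_root k a b c lam z} \<le> 2 * k"
    using card_mono[OF poly_roots_finite[OF h0] sub] card_poly_roots_bound[OF h0] degh by linarith
  have part1: "\<forall>lam z. z \<noteq> 0 \<longrightarrow>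
           det (symbol k a b c z - lam \<cdot>\<^sub>m 1\<^sub>m k)
             = (-1)^(k+1) * (\<Prod>i=1..k. c i) * z
             + (-1)^(k+1) * (\<Prod>i=1..k. b i) * inverse z
             + (det (A0 k a b c - lam \<cdot>\<^sub>m 1\<^sub>m k) - b k * c k * pdet k a b c lam)"
  proof (intro allI impI)
    fix lam z :: complex assume "z \<noteq> 0"
    from P1[OF this, of lam] show "det (symbol k a b c z - lam \<cdot>\<^sub>m 1\<^sub>m k)
             = (-1)^(k+1) * (\<Prod>i=1..k. c i) * z
             + (-1)^(k+1) * (\<Prod>i=1..k. b i) * inverse z
             + (det (A0 k a b c - lam \<cdot>\<^sub>m 1\<^sub>m k) - b k * c k * pdet k a b c lam)"
      by (simp only: C_def B_def G_def)
  qed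
  have part2: "\<exists>g :: complex poly. degree g = k \<and>
           (\<forall>lam. poly g lam = det (A0 k a b c - lam \<cdot>\<^sub>m 1\<^sub>m k) - b k * c k * pdet k a b c lam)"
    by (rule exI[of _ g]) (simp add: pg degg G_def)
  show ?thesis
    by (intro conjI part1 part2 fin card)
qed

end
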